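(* There exists a full amicable orthogonal design $AOD\big(168;\ 4,164;\ 4,164\big)$.
   Context: An orthogonal design $OD(m;c_1,\ldots,c_k)$ is an $m\times m$ matrix $X$ with entries from $\{0,\pm x_1,\ldots,\pm x_k\}$, where $x_1,\ldots,x_k$ are commuting indeterminates, such that $XX^{\rm T}=(\sum_j c_jx_j^2)I_m$. An amicable orthogonal design $AOD(m;c_1,\ldots,c_k;d_1,\ldots,d_\ell)$ is a pair $(X;Y)$ where $X$ is an $OD(m;c_1,\ldots,c_k)$ in indeterminates $x_1,\ldots,x_k$, $Y$ is an $OD(m;d_1,\ldots,d_\ell)$ in indeterminates $y_1,\ldots,y_\ell$ disjoint from the $x_i$, and $XY^{\rm T}=YX^{\rm T}$. It is full if neither $X$ nor $Y$ has a zero entry. *)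

theory Defs
  imports Complex_Main
begin

text \<open>A design matrix of order m is given entrywise as a pair (s, j): the entry is
  s * x_j with s in {-1,0,1} and j an index of an indeterminate (0-based).
  Rows and columns are indexed by {0..<m}.\<close>

type_synonym design = "nat \<Rightarrow> nat \<Rightarrow> int \<times> nat"

definition is_design :: "nat \<Rightarrow> nat \<Rightarrow> design \<Rightarrow> bool" where
  "is_design m k X \<longleftrightarrow>
     (\<forall>i<m. \<forall>j<m. fst (X i j) \<in> {-1, 0, 1} \<and> snd (X i j) < k)"

definition entry_val :: "design \<Rightarrow> (nat \<Rightarrow> real) \<Rightarrow> nat \<Rightarrow> nat \<Rightarrow> real" where
  "entry_val X x i j = real_of_int (fst (X i j)) * x (snd (X i j))"

text \<open>Orthogonal design OD(m; c_1,...,c_k): X X^T = (sum_j c_j x_j^2) I_m as an identity in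
  commuting indeterminates, expressed as an identity for all real values of the indeterminates.\<close>

definition OD :: "nat \<Rightarrow> nat list \<Rightarrow> design \<Rightarrow> bool" where
  "OD m c X \<longleftrightarrow> is_design m (length c) X \<and>
     (\<forall>x :: nat \<Rightarrow> real. \<forall>i<m. \<forall>l<m.
        (\<Sum>t<m. entry_val X x i t * entry_val X x l t) =
        (if i = l then (\<Sum>j<length c. real (c ! j) * (x j)\<^sup>2) else 0))"

definition AOD :: "nat \<Rightarrow> nat list \<Rightarrow> nat list \<Rightarrow> design \<Rightarrow> design \<Rightarrow> bool" where
  "AOD m c d X Y \<longleftrightarrow> OD m c X \<and> OD m d Y \<and>
     (\<forall>(x :: nat \<Rightarrow> real) (y :: nat \<Rightarrow> real). \<forall>i<m. \<forall>l<m.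
        (\<Sum>t<m. entry_val X x i t * entry_val Y y l t) =
        (\<Sum>t<m. entry_val Y y i t * entry_val X x l t))"

definition full_design :: "nat \<Rightarrow> design \<Rightarrow> bool" where
  "full_design m X \<longleftrightarrow> (\<forall>i<m. \<forall>j<m. fst (X i j) \<noteq> 0)"

end

theory Submission
  imports Defs "HOL-Number_Theory.Cong"
begin

definition chiL :: "int list" where "chiL = [0, 1, 1, -1, 1, 1, -1, -1, 1, 1, 1, -1, -1, -1, -1, -1, 1, -1, 1, -1, 1, 1, -1, 1, -1, 1, -1, -1, -1, -1, -1, 1, 1, 1, -1, -1, 1, 1, -1, 1, 1]"

lemma all_upt: "(\<forall>i<n. P i) \<longleftrightarrow> list_all P [0..<n]"
  by (auto simp: list_all_iff)
lemma sum_upt: "(\<Sum>i<n. f i) = sum_list (map f [0..<n])"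
  by (simp add: atLeast0LessThan[symmetric] sum_set_upt_conv_sum_list_nat[symmetric])

lemma g_check: "list_all (\<lambda>d. sum_list (map (\<lambda>k. chiL ! k * chiL ! ((k + d) mod 41)) [0..<41]) = (if d = 0 then 40 else -1)) [0..<41]"
  by code_simp
lemma chi_check: "list_all (\<lambda>k. chiL ! k = chiL ! ((41 - k) mod 41) \<and> chiL ! k \<in> {-1,0,1} \<and> (chiL ! k = 0 \<longleftrightarrow> k = 0)) [0..<41]"
  by code_simp
lemma chisum_check: "sum_list (map (\<lambda>k. chiL ! k) [0..<41]) = 0"
  by code_simp

lemma g: "d < 41 \<Longrightarrow> (\<Sum>k<41. chiL ! k * chiL ! ((k + d) mod 41)) = (if d = 0 then 40 else -1)"
  using g_check unfolding all_upt[symmetric] sum_upt[symmetric] by blast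
lemma chi: "k < 41 \<Longrightarrow> chiL ! k = chiL ! ((41 - k) mod 41) \<and> chiL ! k \<in> {-1,0,1} \<and> (chiL ! k = 0 \<longleftrightarrow> k = 0)"
  using chi_check unfolding all_upt[symmetric] by blast
lemma chisum: "(\<Sum>k<41. chiL ! k) = 0"
  using chisum_check unfolding sum_upt by simp

lemma sum_rot: fixes f :: "nat \<Rightarrow> 'a::comm_monoid_add"
  assumes "n > 0" shows "(\<Sum>k<n. f ((k + s) mod n)) = (\<Sum>k<n. f k)"
proof -
  have inj: "inj_on (\<lambda>k. (k + s) mod n) {..<n}"
  proof (rule inj_onI)
    fix k k' assume "k \<in> {..<n}" "k' \<in> {..<n}" "(k + s) mod n = (k' + s) mod n"
    then have "[k + s = k' + s] (mod n)" "k < n" "k' < n" by (auto simp: cong_def)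
    then show "k = k'" using cong_add_rcancel_nat cong_less_imp_eq_nat by blast
  qed
  have "bij_betw (\<lambda>k. (k + s) mod n) {..<n} {..<n}"
    unfolding bij_betw_def using inj by (simp add: endo_inj_surj image_subsetI assms)
  then show ?thesis by (rule sum.reindex_bij_betw)
qed

lemma sum_split4: "(\<Sum>t<4*(n::nat). f t) = (\<Sum>c<n. \<Sum>r<4. f (4*c+r))"
proof (induction n)
  case (Suc n)
  have e: "4 * Suc n = Suc (Suc (Suc (Suc (4*n))))" by simp
  show ?case by (simp only: e sum.lessThan_Suc Suc.IH) (simp add: numeral_eq_Suc add.assoc)
qed simp

lemma ar1: "0 < a \<Longrightarrow> 0 < b \<Longrightarrow> a < 42 \<Longrightarrow> b < (42::nat) \<Longrightarrow> (a + 41 - b) mod 41 = (41 - (b + 41 - a) mod 41) mod 41"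
  by (cases "a \<le> b"; cases "a = b") (auto simp: le_mod_geq)
lemma ar2: "0 < a \<Longrightarrow> 0 < b \<Longrightarrow> a < 42 \<Longrightarrow> b < (42::nat) \<Longrightarrow> (b + 41 - a) mod 41 = 0 \<longleftrightarrow> a = b"
  by (cases "a \<le> b"; cases "a = b") (auto simp: le_mod_geq)
lemma ar3: "i < 41 \<Longrightarrow> j < (41::nat) \<Longrightarrow> (c + (41 - i) + (i + 41 - j)) mod 41 = (c + (41 - j)) mod 41"
proof -
  assume "i < 41" "j < 41"
  then have "c + (41 - i) + (i + 41 - j) = (c + (41 - j)) + 41" by simp
  then show ?thesis by (metis mod_add_self2)
qed
lemma ar4: "i < 41 \<Longrightarrow> j < (41::nat) \<Longrightarrow> (i + 41 - j) mod 41 = 0 \<longleftrightarrow> i = j"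
  by (cases "j \<le> i"; cases "i = j") (auto simp: le_mod_geq)

definition Wc :: "nat \<Rightarrow> nat \<Rightarrow> int" where "Wc a b = (if a = 0 then (if b = 0 then 0 else 1) else if b = 0 then 1 else chiL ! ((b + 41 - a) mod 41))"

lemma W_diag: "Wc a a = 0"
  by (simp add: Wc_def chiL_def)

lemma Wfacts: assumes "a < 42" "b < 42" shows "Wc a b = Wc b a \<and> Wc a b \<in> {-1,0,1} \<and> (Wc a b = 0 \<longleftrightarrow> a = b)"
proof (cases "a = 0 \<or> b = 0")
  case True then show ?thesis by (auto simp: Wc_def chiL_def)
next
  case False
  define k where "k = (b + 41 - a) mod 41"
  have k: "k < 41" unfolding k_def by simp
  have e: "(a + 41 - b) mod 41 = (41 - k) mod 41" unfolding k_def using assms False by (intro ar1) auto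
  have z: "k = 0 \<longleftrightarrow> a = b" unfolding k_def using assms False by (intro ar2) auto
  show ?thesis using chi[OF k] False z unfolding Wc_def e k_def[symmetric] by auto
qed

lemma WW: assumes "a < 42" "b < 42" shows "(\<Sum>c<42. Wc a c * Wc b c) = (if a = b then 41 else 0)"
proof -
  have s: "(\<Sum>c<42. Wc a c * Wc b c) = Wc a 0 * Wc b 0 + (\<Sum>c<41. Wc a (Suc c) * Wc b (Suc c))"
    by (simp add: sum.lessThan_Suc_shift[of _ 41, simplified])
  have row0: "(\<Sum>c<41. Wc (Suc j) (Suc c)) = 0" if "j < 41" for j
  proof -
    have "(\<Sum>c<41. Wc (Suc j) (Suc c)) = (\<Sum>c<41. chiL ! ((c + (41 - j)) mod 41))"
      using that by (intro sum.cong) (auto simp: Wc_def, metis add.commute)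
    also have "\<dots> = 0" using sum_rot[of 41 "\<lambda>m. chiL ! m"] chisum by simp
    finally show ?thesis .
  qed
  show ?thesis
  proof (cases a)
    case 0
    show ?thesis
    proof (cases b)
      case 0 then show ?thesis using \<open>a = 0\<close> s by (simp add: Wc_def)
    next
      case (Suc j) then show ?thesis using \<open>a = 0\<close> s row0[of j] assms by (simp add: Wc_def)
    qed
  next
    case (Suc i)
    show ?thesis
    proof (cases b)
      case 0 then show ?thesis using \<open>a = Suc i\<close> s row0[of i] assms by (simp add: Wc_def mult.commute)
    next
      case (Suc j)
      have i: "i < 41" and j: "j < 41" using assms \<open>a = Suc i\<close> Suc by auto
      define d where "d = (i + 41 - j) mod 41"
      have d: "d < 41" unfolding d_def by simp
      have "(\<Sum>c<41. Wc a (Suc c) * Wc b (Suc c)) = (\<Sum>c<41. (\<lambda>m. chiL ! m * chiL ! ((m + d) mod 41)) ((c + (41 - i)) mod 41))"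
      proof (intro sum.cong refl)
        fix c assume "c \<in> {..<41::nat}"
        have "((c + (41 - i)) mod 41 + d) mod 41 = (c + (41 - i) + (i + 41 - j)) mod 41"
          unfolding d_def by (simp add: mod_add_eq)
        also have "\<dots> = (c + (41 - j)) mod 41" using i j by (rule ar3)
        finally show "Wc a (Suc c) * Wc b (Suc c) = (\<lambda>m. chiL ! m * chiL ! ((m + d) mod 41)) ((c + (41 - i)) mod 41)"
          using \<open>a = Suc i\<close> Suc i j by (simp add: Wc_def add.commute)
      qed
      also have "\<dots> = (\<Sum>m<41. chiL ! m * chiL ! ((m + d) mod 41))" by (rule sum_rot) simp
      also have "\<dots> = (if d = 0 then 40 else -1)" by (rule g[OF d])
      finally show ?thesis using s \<open>a = Suc i\<close> Suc i j unfolding d_def by (auto simp: Wc_def ar4)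
    qed
  qed
qed

definition Dl :: "nat \<Rightarrow> nat \<Rightarrow> int" where "Dl a b = (if a = b then 1 else 0)"
definition Mm :: "nat \<Rightarrow> nat \<Rightarrow> int" where "Mm p q = [[1,1,1,1],[1,1,-1,-1],[1,-1,1,-1],[1,-1,-1,1]] ! p ! q"
definition Nm :: "nat \<Rightarrow> nat \<Rightarrow> int" where "Nm p q = [[1,1,-1,-1],[-1,-1,-1,-1],[1,-1,-1,1],[-1,1,-1,1]] ! p ! q"
definition M2m :: "nat \<Rightarrow> nat \<Rightarrow> int" where "M2m p q = [[1,1,1,1],[-1,-1,1,1],[1,-1,1,-1],[-1,1,1,-1]] ! p ! q"
definition N2m :: "nat \<Rightarrow> nat \<Rightarrow> int" where "N2m p q = [[1,1,-1,-1],[1,1,1,1],[1,-1,-1,1],[1,-1,1,-1]] ! p ! q"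
definition P4 :: "(nat \<Rightarrow> nat \<Rightarrow> int) \<Rightarrow> (nat \<Rightarrow> nat \<Rightarrow> int) \<Rightarrow> nat \<Rightarrow> nat \<Rightarrow> int" where
  "P4 A C p q = (\<Sum>r<4. A p r * C q r)"

lemma c4: "list_all (\<lambda>p. list_all (\<lambda>q.
   sum_list (map (\<lambda>r. Mm p r * Mm q r) [0..<4]) = 4 * Dl p q \<and>
   sum_list (map (\<lambda>r. Nm p r * Nm q r) [0..<4]) = 4 * Dl p q \<and>
   sum_list (map (\<lambda>r. M2m p r * M2m q r) [0..<4]) = 4 * Dl p q \<and>
   sum_list (map (\<lambda>r. N2m p r * N2m q r) [0..<4]) = 4 * Dl p q \<and>
   sum_list (map (\<lambda>r. Nm p r * Mm q r) [0..<4]) = - sum_list (map (\<lambda>r. Mm p r * Nm q r) [0..<4]) \<and>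
   sum_list (map (\<lambda>r. N2m p r * M2m q r) [0..<4]) = - sum_list (map (\<lambda>r. M2m p r * N2m q r) [0..<4]) \<and>
   sum_list (map (\<lambda>r. M2m p r * Mm q r) [0..<4]) = sum_list (map (\<lambda>r. Mm p r * M2m q r) [0..<4]) \<and>
   sum_list (map (\<lambda>r. N2m p r * Mm q r) [0..<4]) = sum_list (map (\<lambda>r. Mm p r * N2m q r) [0..<4]) \<and>
   sum_list (map (\<lambda>r. M2m p r * Nm q r) [0..<4]) = sum_list (map (\<lambda>r. Nm p r * M2m q r) [0..<4]) \<and>
   sum_list (map (\<lambda>r. N2m p r * Nm q r) [0..<4]) = sum_list (map (\<lambda>r. Nm p r * N2m q r) [0..<4]) \<and>
   Mm p q \<in> {-1,1} \<and> Nm p q \<in> {-1,1} \<and> M2m p q \<in> {-1,1} \<and> N2m p q \<in> {-1,1}) [0..<4]) [0..<4]"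
  by code_simp

lemma f4: assumes "p < 4" "q < 4" shows
   "P4 Mm Mm p q = 4 * Dl p q \<and> P4 Nm Nm p q = 4 * Dl p q \<and> P4 M2m M2m p q = 4 * Dl p q \<and> P4 N2m N2m p q = 4 * Dl p q \<and>
    P4 Nm Mm p q = - P4 Mm Nm p q \<and> P4 N2m M2m p q = - P4 M2m N2m p q \<and>
    P4 M2m Mm p q = P4 Mm M2m p q \<and> P4 N2m Mm p q = P4 Mm N2m p q \<and>
    P4 M2m Nm p q = P4 Nm M2m p q \<and> P4 N2m Nm p q = P4 Nm N2m p q \<and>
    Mm p q \<in> {-1,1} \<and> Nm p q \<in> {-1,1} \<and> M2m p q \<in> {-1,1} \<and> N2m p q \<in> {-1,1}"
  using c4 assms unfolding all_upt[symmetric] sum_upt[symmetric] P4_def by blast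

definition mk :: "(nat \<Rightarrow> nat \<Rightarrow> int) \<Rightarrow> (nat \<Rightarrow> nat \<Rightarrow> int) \<Rightarrow> design" where
  "mk A B i j = (if i div 4 = j div 4 then (A (i mod 4) (j mod 4), 0)
                 else (Wc (i div 4) (j div 4) * B (i mod 4) (j mod 4), 1))"

lemma ev_mk: "entry_val (mk A B) x i j =
   of_int (Dl (i div 4) (j div 4) * A (i mod 4) (j mod 4)) * x 0 + of_int (Wc (i div 4) (j div 4) * B (i mod 4) (j mod 4)) * x 1"
  by (simp add: entry_val_def mk_def Dl_def W_diag)

lemma dsum: "(\<Sum>c\<in>S. \<Sum>r\<in>T. k * (f c * g r)) = k * ((\<Sum>c\<in>S. f c) * (\<Sum>r\<in>T. g r))" for k :: real
proof -
  have 1: "\<And>c. (\<Sum>r\<in>T. k * (f c * g r)) = k * (f c * sum g T)"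
    by (simp add: sum_distrib_left mult.assoc)
  have "k * ((\<Sum>c\<in>S. f c) * (\<Sum>r\<in>T. g r)) = (\<Sum>c\<in>S. k * (f c * sum g T))"
    by (simp add: sum_distrib_left sum_distrib_right) (rule sum.swap)
  then show ?thesis by (simp add: 1)
qed

lemma kron_mk:
  "(\<Sum>t<168. entry_val (mk A B) x i t * entry_val (mk C E) y l t) =
     x 0 * y 0 * ((\<Sum>c<42. real_of_int (Dl (i div 4) c * Dl (l div 4) c)) * (\<Sum>r<4. real_of_int (A (i mod 4) r * C (l mod 4) r)))
   + x 0 * y 1 * ((\<Sum>c<42. real_of_int (Dl (i div 4) c * Wc (l div 4) c)) * (\<Sum>r<4. real_of_int (A (i mod 4) r * E (l mod 4) r)))
   + x 1 * y 0 * ((\<Sum>c<42. real_of_int (Wc (i div 4) c * Dl (l div 4) c)) * (\<Sum>r<4. real_of_int (B (i mod 4) r * C (l mod 4) r)))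
   + x 1 * y 1 * ((\<Sum>c<42. real_of_int (Wc (i div 4) c * Wc (l div 4) c)) * (\<Sum>r<4. real_of_int (B (i mod 4) r * E (l mod 4) r)))"
  (is "?L = ?R")
proof -
  have "?L = (\<Sum>c<42. \<Sum>r<4. entry_val (mk A B) x i (4*c+r) * entry_val (mk C E) y l (4*c+r))"
    using sum_split4[where n=42] by simp
  also have "\<dots> = (\<Sum>c<42. \<Sum>r<4.
       x 0 * y 0 * (real_of_int (Dl (i div 4) c * Dl (l div 4) c) * real_of_int (A (i mod 4) r * C (l mod 4) r))
     + x 0 * y 1 * (real_of_int (Dl (i div 4) c * Wc (l div 4) c) * real_of_int (A (i mod 4) r * E (l mod 4) r))
     + x 1 * y 0 * (real_of_int (Wc (i div 4) c * Dl (l div 4) c) * real_of_int (B (i mod 4) r * C (l mod 4) r))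
     + x 1 * y 1 * (real_of_int (Wc (i div 4) c * Wc (l div 4) c) * real_of_int (B (i mod 4) r * E (l mod 4) r)))"
  proof (intro sum.cong refl)
    fix c r assume "r \<in> {..<4::nat}"
    then have "(4*c+r) div 4 = c" "(4*c+r) mod 4 = r" by auto
    then show "entry_val (mk A B) x i (4*c+r) * entry_val (mk C E) y l (4*c+r) = 
       x 0 * y 0 * (real_of_int (Dl (i div 4) c * Dl (l div 4) c) * real_of_int (A (i mod 4) r * C (l mod 4) r))
     + x 0 * y 1 * (real_of_int (Dl (i div 4) c * Wc (l div 4) c) * real_of_int (A (i mod 4) r * E (l mod 4) r))
     + x 1 * y 0 * (real_of_int (Wc (i div 4) c * Dl (l div 4) c) * real_of_int (B (i mod 4) r * C (l mod 4) r))
     + x 1 * y 1 * (real_of_int (Wc (i div 4) c * Wc (l div 4) c) * real_of_int (B (i mod 4) r * E (l mod 4) r))"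
      unfolding ev_mk by (simp add: algebra_simps)
  qed
  also have "\<dots> = ?R" by (simp only: sum.distrib dsum)
  finally show ?thesis .
qed

lemma SDD: "(\<Sum>c<42. real_of_int (Dl a c * Dl b c)) = real_of_int (Dl a b)" if "a < 42"
proof -
  have "\<And>c. real_of_int (Dl a c * Dl b c) = (if c = a then real_of_int (Dl a b) else 0)" by (simp add: Dl_def)
  then show ?thesis using that by simp
qed
lemma SDW: "(\<Sum>c<42. real_of_int (Dl a c * Wc b c)) = real_of_int (Wc a b)" if "a < 42" "b < 42"
proof -
  have "\<And>c. real_of_int (Dl a c * Wc b c) = (if c = a then real_of_int (Wc a b) else 0)"
    using Wfacts[OF that] by (simp add: Dl_def)
  then show ?thesis using that by simp
qed
lemma SWD: "(\<Sum>c<42. real_of_int (Wc a c * Dl b c)) = real_of_int (Wc a b)" if "b < 42"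
proof -
  have "\<And>c. real_of_int (Wc a c * Dl b c) = (if c = b then real_of_int (Wc a b) else 0)"
    by (simp add: Dl_def)
  then show ?thesis using that by simp
qed
lemma SWW: "(\<Sum>c<42. real_of_int (Wc a c * Wc b c)) = 41 * real_of_int (Dl a b)" if "a < 42" "b < 42"
proof -
  have "(\<Sum>c<42. real_of_int (Wc a c * Wc b c)) = real_of_int (\<Sum>c<42. Wc a c * Wc b c)" by simp
  then show ?thesis using WW[OF that] by (simp add: Dl_def)
qed
lemma SP: "(\<Sum>r<4. real_of_int (A p r * C q r)) = real_of_int (P4 A C p q)"
  by (simp add: P4_def)

lemma kron_full:
  assumes "i < 168" "l < 168"
  shows "(\<Sum>t<168. entry_val (mk A B) x i t * entry_val (mk C E) y l t) =
     x 0 * y 0 * (real_of_int (Dl (i div 4) (l div 4)) * real_of_int (P4 A C (i mod 4) (l mod 4)))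
   + x 0 * y 1 * (real_of_int (Wc (i div 4) (l div 4)) * real_of_int (P4 A E (i mod 4) (l mod 4)))
   + x 1 * y 0 * (real_of_int (Wc (i div 4) (l div 4)) * real_of_int (P4 B C (i mod 4) (l mod 4)))
   + x 1 * y 1 * (41 * real_of_int (Dl (i div 4) (l div 4)) * real_of_int (P4 B E (i mod 4) (l mod 4)))"
proof -
  have a: "i div 4 < 42" "l div 4 < 42" using assms by auto
  show ?thesis unfolding kron_mk SP SDD[OF a(1)] SDW[OF a] SWD[OF a(2)] SWW[OF a] ..
qed

lemma idx: "i < 168 \<Longrightarrow> l < 168 \<Longrightarrow> Dl (i div 4) (l div 4) * Dl (i mod 4) (l mod 4) = (if i = l then 1 else 0)"
  by (auto simp: Dl_def) (metis div_mod_decomp)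

lemma design_mk: assumes "\<And>p q. p < 4 \<Longrightarrow> q < 4 \<Longrightarrow> A p q \<in> {-1,1} \<and> B p q \<in> {-1,1}"
  shows "is_design 168 2 (mk A B) \<and> full_design 168 (mk A B)"
proof -
  have "fst (mk A B i j) \<in> {-1,0,1} \<and> snd (mk A B i j) < 2 \<and> fst (mk A B i j) \<noteq> 0" if "i < 168" "j < 168" for i j
  proof -
    have a: "i div 4 < 42" "j div 4 < 42" "i mod 4 < 4" "j mod 4 < 4" using that by auto
    show ?thesis
    proof (cases "i div 4 = j div 4")
      case True then show ?thesis using assms[OF a(3,4)] by (auto simp: mk_def)
    next
      case False
      have "Wc (i div 4) (j div 4) \<in> {-1,1}" using Wfacts[OF a(1,2)] False by auto
      then show ?thesis using assms[OF a(3,4)] False by (auto simp: mk_def)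
    qed
  qed
  then show ?thesis unfolding is_design_def full_design_def by auto
qed

lemma OD_mk:
  assumes "\<And>p q. p < 4 \<Longrightarrow> q < 4 \<Longrightarrow> A p q \<in> {-1,1} \<and> B p q \<in> {-1,1}
      \<and> P4 A A p q = 4 * Dl p q \<and> P4 B B p q = 4 * Dl p q \<and> P4 B A p q = - P4 A B p q"
  shows "OD 168 [4, 164] (mk A B)"
  unfolding OD_def
proof (intro conjI allI impI)
  have "length [4::nat, 164] = 2" by simp
  then show "is_design 168 (length [4::nat, 164]) (mk A B)" using design_mk assms by presburger
  fix x :: "nat \<Rightarrow> real" and i l :: nat assume il: "i < 168" "l < 168"
  have p: "i mod 4 < 4" "l mod 4 < 4" by auto
  note h = assms[OF p]
  have e: "real_of_int (Dl (i div 4) (l div 4)) * real_of_int (Dl (i mod 4) (l mod 4)) = (if i = l then 1 else 0)"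
    using idx[OF il] by (metis of_int_mult of_int_1 of_int_0)
  have s2: "(\<Sum>j<length [4::nat, 164]. real ([4::nat, 164] ! j) * (x j)\<^sup>2) = 4 * (x 0)\<^sup>2 + 164 * (x 1)\<^sup>2"
    by (simp add: numeral_2_eq_2)
  have "(\<Sum>t<168. entry_val (mk A B) x i t * entry_val (mk A B) x l t) =
        (4 * (x 0)\<^sup>2 + 164 * (x 1)\<^sup>2) * (real_of_int (Dl (i div 4) (l div 4)) * real_of_int (Dl (i mod 4) (l mod 4)))"
    unfolding kron_full[OF il] using h by (simp add: algebra_simps power2_eq_square)
  then show "(\<Sum>t<168. entry_val (mk A B) x i t * entry_val (mk A B) x l t) =
        (if i = l then \<Sum>j<length [4::nat, 164]. real ([4::nat, 164] ! j) * (x j)\<^sup>2 else 0)"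
    unfolding s2 e by simp
qed

theorem mainTheorem5:
  shows "\<exists>X Y. AOD 168 [4, 164] [4, 164] X Y \<and> full_design 168 X \<and> full_design 168 Y"
proof (intro exI conjI)
  show "full_design 168 (mk Mm Nm)" using design_mk f4 by blast
  show "full_design 168 (mk M2m N2m)" using design_mk f4 by blast
  show "AOD 168 [4, 164] [4, 164] (mk Mm Nm) (mk M2m N2m)"
    unfolding AOD_def
  proof (intro conjI allI impI)
    show "OD 168 [4, 164] (mk Mm Nm)" by (rule OD_mk) (use f4 in blast)
    show "OD 168 [4, 164] (mk M2m N2m)" by (rule OD_mk) (use f4 in blast)
    fix x y :: "nat \<Rightarrow> real" and i l :: nat assume il: "i < 168" "l < 168"
    have p: "i mod 4 < 4" "l mod 4 < 4" by auto
    note h = f4[OF p]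
    show "(\<Sum>t<168. entry_val (mk Mm Nm) x i t * entry_val (mk M2m N2m) y l t) =
          (\<Sum>t<168. entry_val (mk M2m N2m) y i t * entry_val (mk Mm Nm) x l t)"
      unfolding kron_full[OF il] using h by (simp add: algebra_simps)
  qed
qed

end
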